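(* Let $\mathcal{P}_1,\mathcal{P}_2$ be plans, each with $t$ factors and blocks of size $k$, where every factor of $\mathcal{P}_j$ has level set $S_j$ ($j=1,2$), $S_1\neq S_2$, and let $\mathcal{P}=\mathcal{P}_1\cup\mathcal{P}_2$ be their union plan with level set $U=S_1\cup S_2$. Then: (a) if both $\mathcal{P}_1$ and $\mathcal{P}_2$ are POTBs, then $\mathcal{P}$ is a POTB; (b) if $\mathcal{P}_1$ and $\mathcal{P}_2$ are connected, then $\mathcal{P}$ is connected if and only if $S_1\cap S_2\neq\emptyset$.
   Context: A plan with $t$ factors on $b$ blocks of size $k$, all factors having level set $S$: a run assigns a level in $S$ to each factor; the plan is a collection of $b$ blocks, each a multiset of $k$ runs. For factors $A_i,A_j$, $N_{ij}$ is the matrix (rows/columns indexed by levels) whose $(p,q)$ entry is the number of runs with $A_i$ at $p$ and $A_j$ at $q$; $L_i$ is the (levels $\times$ blocks) matrix whose $(p,l)$ entry is the number of runs in block $l$ with $A_i$ at $p$. $A_i,A_j$ are OTB if $kN_{ij}=L_iL_j^T$; a POTB is a plan in which every pair of distinct factors is OTB. Union plan: $\mathcal{P}_1\cup\mathcal{P}_2$ is the plan whose blocks are all blocks of $\mathcal{P}_1$ together with all blocks of $\mathcal{P}_2$, regarded as a plan with $t$ factors each having level set $U=S_1\cup S_2$ (the $i$th factor of the union is at level $p$ exactly in those runs where the $i$th factor of $\mathcal{P}_1$ or of $\mathcal{P}_2$ is at level $p$). Under the additive model (response = general mean + block effect + sum of factor-level effects + error), $C_{i;\bar i}$ is the information matrix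 for the effects of the $i$th factor after eliminating the general mean, block effects and effects of all other factors; a plan whose factors have $v$ levels is connected if $\operatorname{rank}C_{i;\bar i}=v-1$ for every $i$. *)

theory Defs
  imports "Jordan_Normal_Form.DL_Rank" "HOL-Library.Multiset"
begin

text \<open>A run assigns a level to each factor (only factors with index below t matter);
  a block is a multiset of runs; a plan is a list of blocks (block l is the l-th entry).\<close>
type_synonym 'a run = "nat \<Rightarrow> 'a"
type_synonym 'a plan = "'a run multiset list"

definition plan_wf :: "nat \<Rightarrow> nat \<Rightarrow> 'a set \<Rightarrow> 'a plan \<Rightarrow> bool" where
  "plan_wf t k S P \<longleftrightarrow> finite S \<and>
     (\<forall>B\<in>set P. size B = k \<and> (\<forall>r\<in>#B. \<forall>i<t. r i \<in> S))"

definition union_plan :: "'a plan \<Rightarrow> 'a plan \<Rightarrow> 'a plan" where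
  "union_plan P1 P2 = P1 @ P2"

text \<open>Entry (p,q) of N_ij and entry (p,l) of L_i.\<close>
definition Nmat :: "'a plan \<Rightarrow> nat \<Rightarrow> nat \<Rightarrow> 'a \<Rightarrow> 'a \<Rightarrow> nat" where
  "Nmat P i j p q = sum_list (map (\<lambda>B. size (filter_mset (\<lambda>r. r i = p \<and> r j = q) B)) P)"

definition Lmat :: "'a plan \<Rightarrow> nat \<Rightarrow> 'a \<Rightarrow> nat \<Rightarrow> nat" where
  "Lmat P i p l = size (filter_mset (\<lambda>r. r i = p) (P ! l))"

text \<open>k N_ij = L_i L_j^T, entrywise over the level set S.\<close>
definition OTB :: "nat \<Rightarrow> 'a set \<Rightarrow> 'a plan \<Rightarrow> nat \<Rightarrow> nat \<Rightarrow> bool" where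
  "OTB k S P i j \<longleftrightarrow>
     (\<forall>p\<in>S. \<forall>q\<in>S. k * Nmat P i j p q = (\<Sum>l<length P. Lmat P i p l * Lmat P j q l))"

definition POTB :: "nat \<Rightarrow> nat \<Rightarrow> 'a set \<Rightarrow> 'a plan \<Rightarrow> bool" where
  "POTB t k S P \<longleftrightarrow> (\<forall>i<t. \<forall>j<t. i \<noteq> j \<longrightarrow> OTB k S P i j)"

text \<open>Experimental units (block index, run), listing each block's runs with multiplicity.\<close>
definition units :: "'a plan \<Rightarrow> (nat \<times> 'a run) list" where
  "units P = concat (map (\<lambda>l. map (\<lambda>r. (l, r)) (SOME xs. mset xs = P ! l)) [0..<length P])"

definition levs :: "'a set \<Rightarrow> 'a list" where
  "levs S = (SOME xs. distinct xs \<and> set xs = S)"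

definition fac_cols :: "'a set \<Rightarrow> 'a plan \<Rightarrow> nat \<Rightarrow> real vec list" where
  "fac_cols S P i = map (\<lambda>p. vec (length (units P))
       (\<lambda>u. if snd (units P ! u) i = p then 1 else 0)) (levs S)"

definition blk_cols :: "'a plan \<Rightarrow> real vec list" where
  "blk_cols P = map (\<lambda>l. vec (length (units P))
       (\<lambda>u. if fst (units P ! u) = l then 1 else 0)) [0..<length P]"

definition nuis_mat :: "nat \<Rightarrow> 'a set \<Rightarrow> 'a plan \<Rightarrow> nat \<Rightarrow> real mat" where
  "nuis_mat t S P i = mat_of_cols (length (units P))
     ([vec (length (units P)) (\<lambda>_. 1)] @ blk_cols P @
      concat (map (fac_cols S P) (filter (\<lambda>j. j \<noteq> i) [0..<t])))"

definition orth_proj :: "nat \<Rightarrow> real mat \<Rightarrow> real mat" where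
  "orth_proj n W = (THE Pr. Pr \<in> carrier_mat n n \<and> transpose_mat Pr = Pr \<and> Pr * W = W \<and>
       (\<exists>Y \<in> carrier_mat (dim_col W) n. Pr = W * Y))"

definition info_mat :: "nat \<Rightarrow> 'a set \<Rightarrow> 'a plan \<Rightarrow> nat \<Rightarrow> real mat" where
  "info_mat t S P i =
     (let n = length (units P); Xi = mat_of_cols n (fac_cols S P i) in
      transpose_mat Xi * (1\<^sub>m n - orth_proj n (nuis_mat t S P i)) * Xi)"

definition connected_plan :: "nat \<Rightarrow> 'a set \<Rightarrow> 'a plan \<Rightarrow> bool" where
  "connected_plan t S P \<longleftrightarrow>
     (\<forall>i<t. int (vec_space.rank (card S) (info_mat t S P i)) = int (card S) - 1)"

end

theory Submission
  imports Defs
begin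

definition colsp :: "real mat \<Rightarrow> real vec set" where
  "colsp W = {W *\<^sub>v b | b. b \<in> carrier_vec (dim_col W)}"

lemma mat_of_cols_Cons_mult:
  fixes w :: "real vec"
  assumes w: "w \<in> carrier_vec n" and cs: "set cs \<subseteq> carrier_vec n"
    and b: "b \<in> carrier_vec (Suc (length cs))"
  shows "mat_of_cols n (w # cs) *\<^sub>v b =
     b $ 0 \<cdot>\<^sub>v w + mat_of_cols n cs *\<^sub>v vec (length cs) (\<lambda>i. b $ Suc i)"
proof (rule eq_vecI)
  show "dim_vec (mat_of_cols n (w # cs) *\<^sub>v b) =
    dim_vec (b $ 0 \<cdot>\<^sub>v w + mat_of_cols n cs *\<^sub>v vec (length cs) (\<lambda>i. b $ Suc i))"
    using w by simp
  fix i assume "i < dim_vec (b $ 0 \<cdot>\<^sub>v w + mat_of_cols n cs *\<^sub>v vec (length cs) (\<lambda>i. b $ Suc i))"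
  hence i: "i < n" using w by simp
  have "(mat_of_cols n (w # cs) *\<^sub>v b) $ i = (\<Sum>j<Suc (length cs). mat_of_cols n (w # cs) $$ (i, j) * b $ j)"
    using i b by (simp add: mult_mat_vec_def scalar_prod_def lessThan_atLeast0)
  also have "\<dots> = mat_of_cols n (w # cs) $$ (i, 0) * b $ 0 +
     (\<Sum>j<length cs. mat_of_cols n (w # cs) $$ (i, Suc j) * b $ Suc j)"
    by (subst sum.lessThan_Suc_shift) simp
  also have "\<dots> = b $ 0 * w $ i + (\<Sum>j<length cs. cs ! j $ i * b $ Suc j)"
    using i by (simp add: mat_of_cols_Cons_index_0 mat_of_cols_Cons_index_Suc mat_of_cols_index)
  also have "\<dots> = (b $ 0 \<cdot>\<^sub>v w + mat_of_cols n cs *\<^sub>v vec (length cs) (\<lambda>i. b $ Suc i)) $ i"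
    using i w by (simp add: mult_mat_vec_def scalar_prod_def lessThan_atLeast0 mat_of_cols_index mult.commute)
  finally show "(mat_of_cols n (w # cs) *\<^sub>v b) $ i =
     (b $ 0 \<cdot>\<^sub>v w + mat_of_cols n cs *\<^sub>v vec (length cs) (\<lambda>i. b $ Suc i)) $ i" .
qed


lemma sprod_self_eq0:
  fixes r :: "real vec"
  assumes "r \<in> carrier_vec n" "r \<bullet> r = 0" shows "r = 0\<^sub>v n"
proof -
  have "(\<Sum>i\<in>{0..<n}. r $ i * r $ i) = 0" using assms by (simp add: scalar_prod_def)
  hence "\<forall>i\<in>{0..<n}. r $ i * r $ i = 0" by (subst (asm) sum_nonneg_eq_0_iff) auto
  thus ?thesis using assms by (intro eq_vecI) auto
qed

lemma transpose_sprod: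
  fixes P :: "real mat"
  assumes "P \<in> carrier_mat n n" "transpose_mat P = P" "x \<in> carrier_vec n" "y \<in> carrier_vec n"
  shows "(P *\<^sub>v x) \<bullet> y = x \<bullet> (P *\<^sub>v y)"
proof -
  have "(P *\<^sub>v x) \<bullet> y = y \<bullet> (P *\<^sub>v x)" using assms by (intro comm_scalar_prod) auto
  also have "\<dots> = (transpose_mat P *\<^sub>v y) \<bullet> x"
    using assms by (subst transpose_vec_mult_scalar[of P n n]) auto
  also have "\<dots> = x \<bullet> (P *\<^sub>v y)" using assms comm_scalar_prod[of "P *\<^sub>v y" n x] by auto
  finally show ?thesis .
qed

lemma fix_colsp:
  fixes P :: "real mat"
  assumes P: "P \<in> carrier_mat n n" and cs: "set cs \<subseteq> carrier_vec n"
    and hfix: "\<forall>w\<in>set cs. P *\<^sub>v w = w"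
    and b: "b \<in> carrier_vec (length cs)"
  shows "P *\<^sub>v (mat_of_cols n cs *\<^sub>v b) = mat_of_cols n cs *\<^sub>v b"
proof -
  have "P * mat_of_cols n cs = mat_of_cols n cs"
  proof (rule eq_matI)
    fix i j assume i: "i < dim_row (mat_of_cols n cs)" and j: "j < dim_col (mat_of_cols n cs)"
    hence ij: "i < n" "j < length cs" by auto
    have "(P * mat_of_cols n cs) $$ (i, j) = row P i \<bullet> (cs ! j)"
    proof -
      have "cs ! j \<in> carrier_vec n" using cs nth_mem[OF ij(2)] by auto
      thus ?thesis using P ij by (simp add: index_mult_mat col_mat_of_cols)
    qed
    also have "\<dots> = (P *\<^sub>v cs ! j) $ i" using P ij by simp
    also have "\<dots> = cs ! j $ i" using hfix ij by simp
    finally show "(P * mat_of_cols n cs) $$ (i, j) = mat_of_cols n cs $$ (i, j)"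
      using ij by (simp add: mat_of_cols_index)
  qed (use P in auto)
  thus ?thesis using P b by (metis assoc_mult_mat_vec mat_of_cols_carrier(1))
qed

lemma proj_exists_list:
  fixes cs :: "real vec list"
  assumes "set cs \<subseteq> carrier_vec n"
  shows "\<exists>P\<in>carrier_mat n n. transpose_mat P = P \<and> (\<forall>w\<in>set cs. P *\<^sub>v w = w) \<and>
           (\<forall>v\<in>carrier_vec n. P *\<^sub>v v \<in> colsp (mat_of_cols n cs))"
  using assms
proof (induction cs)
  case Nil
  show ?case
    by (rule bexI[of _ "0\<^sub>m n n"]) (auto simp: colsp_def intro!: exI[of _ "0\<^sub>v 0"] eq_vecI)
next
  case (Cons w cs)
  from Cons.prems have w: "w \<in> carrier_vec n" and cs: "set cs \<subseteq> carrier_vec n" by auto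
  from Cons.IH[OF cs] obtain P where P: "P \<in> carrier_mat n n" and PT: "transpose_mat P = P"
    and Pfix: "\<forall>w\<in>set cs. P *\<^sub>v w = w"
    and Pcol: "\<forall>v\<in>carrier_vec n. P *\<^sub>v v \<in> colsp (mat_of_cols n cs)" by blast
  let ?A = "mat_of_cols n cs"
  let ?A' = "mat_of_cols n (w # cs)"
  have PP: "P *\<^sub>v (P *\<^sub>v v) = P *\<^sub>v v" if v: "v \<in> carrier_vec n" for v
  proof -
    obtain b where b: "b \<in> carrier_vec (length cs)" "P *\<^sub>v v = ?A *\<^sub>v b"
      using Pcol v unfolding colsp_def by auto
    show ?thesis unfolding b(2) using fix_colsp[OF P cs Pfix b(1)] .
  qed
  have ext: "?A *\<^sub>v b + a \<cdot>\<^sub>v w \<in> colsp ?A'" if b: "b \<in> carrier_vec (length cs)" for a b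
  proof -
    let ?b' = "vec (Suc (length cs)) (\<lambda>i. if i = 0 then a else b $ (i - 1))"
    have "?A' *\<^sub>v ?b' = a \<cdot>\<^sub>v w + ?A *\<^sub>v vec (length cs) (\<lambda>i. ?b' $ Suc i)"
      using mat_of_cols_Cons_mult[OF w cs, of ?b'] by simp
    also have "vec (length cs) (\<lambda>i. ?b' $ Suc i) = b" using b by (intro eq_vecI) auto
    also have "a \<cdot>\<^sub>v w + ?A *\<^sub>v b = ?A *\<^sub>v b + a \<cdot>\<^sub>v w"
      using w mult_mat_vec_carrier[of ?A n "length cs" b] b by (intro comm_add_vec) auto
    finally show ?thesis unfolding colsp_def by (intro CollectI exI[of _ ?b']) auto
  qed
  define r where "r = w - P *\<^sub>v w"
  have r: "r \<in> carrier_vec n" using w P by (simp add: r_def)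
  have wr: "w = r + P *\<^sub>v w" using w P unfolding r_def by auto
  show ?case
  proof (cases "r = 0\<^sub>v n")
    case True
    hence Pw: "P *\<^sub>v w = w" using wr w P by auto
    show ?thesis
    proof (intro bexI[OF _ P] conjI ballI)
      fix v :: "real vec" assume v: "v \<in> carrier_vec n"
      obtain b where b: "b \<in> carrier_vec (length cs)" "P *\<^sub>v v = ?A *\<^sub>v b"
        using Pcol v unfolding colsp_def by auto
      have "P *\<^sub>v v = ?A *\<^sub>v b + 0 \<cdot>\<^sub>v w" using b w P by auto
      thus "P *\<^sub>v v \<in> colsp ?A'" using ext[OF b(1)] by simp
    qed (use PT Pw Pfix in auto)
  next
    case False
    define rr where "rr = r \<bullet> r"
    have rr0: "rr \<noteq> 0" using sprod_self_eq0[OF r] False rr_def by auto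
    define Q where "Q = mat n n (\<lambda>(i,j). P $$ (i,j) + r $ i * r $ j / rr)"
    have Q: "Q \<in> carrier_mat n n" by (simp add: Q_def)
    have Qv: "Q *\<^sub>v v = P *\<^sub>v v + ((r \<bullet> v) / rr) \<cdot>\<^sub>v r" if v: "v \<in> carrier_vec n" for v
    proof (rule eq_vecI)
      fix i assume "i < dim_vec (P *\<^sub>v v + ((r \<bullet> v) / rr) \<cdot>\<^sub>v r)"
      hence i: "i < n" using P r by simp
      have "(Q *\<^sub>v v) $ i = (\<Sum>j=0..<n. (P $$ (i,j) + r $ i * r $ j / rr) * v $ j)"
        using i v by (simp add: Q_def mult_mat_vec_def scalar_prod_def row_def)
      also have "\<dots> = (\<Sum>j=0..<n. P $$ (i,j) * v $ j) + (r \<bullet> v) / rr * r $ i"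
        using v by (simp add: scalar_prod_def algebra_simps sum.distrib sum_distrib_left sum_divide_distrib)
      also have "\<dots> = (P *\<^sub>v v + ((r \<bullet> v) / rr) \<cdot>\<^sub>v r) $ i"
        using i v P r by (simp add: mult_mat_vec_def scalar_prod_def row_def)
      finally show "(Q *\<^sub>v v) $ i = (P *\<^sub>v v + ((r \<bullet> v) / rr) \<cdot>\<^sub>v r) $ i" .
    qed (use P Q r in auto)
    have QT: "transpose_mat Q = Q"
    proof (rule eq_matI)
      fix i j assume "i < dim_row Q" "j < dim_col Q"
      hence ij: "i < n" "j < n" using Q by auto
      have "P $$ (j, i) = P $$ (i, j)" using PT ij P
        by (metis carrier_matD(1) carrier_matD(2) index_transpose_mat(1))
      thus "transpose_mat Q $$ (i, j) = Q $$ (i, j)" using ij by (simp add: Q_def)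
    qed (use Q in auto)
    have rP: "r \<bullet> (P *\<^sub>v u) = 0" if u: "u \<in> carrier_vec n" for u
    proof -
      have "r \<bullet> (P *\<^sub>v u) = w \<bullet> (P *\<^sub>v u) - (P *\<^sub>v w) \<bullet> (P *\<^sub>v u)"
        unfolding r_def using w P u by (subst minus_scalar_prod_distrib) auto
      also have "(P *\<^sub>v w) \<bullet> (P *\<^sub>v u) = w \<bullet> (P *\<^sub>v (P *\<^sub>v u))"
        using transpose_sprod[OF P PT w, of "P *\<^sub>v u"] P u by auto
      also have "\<dots> = w \<bullet> (P *\<^sub>v u)" using PP u by simp
      finally show ?thesis by simp
    qed
    show ?thesis
    proof (intro bexI[OF _ Q] conjI ballI)
      show "transpose_mat Q = Q" by (rule QT)
    next
      fix u assume u: "u \<in> set (w # cs)"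
      show "Q *\<^sub>v u = u"
      proof (cases "u = w")
        case True
        have "r \<bullet> w = r \<bullet> r + r \<bullet> (P *\<^sub>v w)"
          using r w P by (subst wr) (simp add: scalar_prod_add_distrib)
        hence "r \<bullet> w = rr" using rP[OF w] rr_def by simp
        hence "Q *\<^sub>v w = P *\<^sub>v w + r" using Qv[OF w] rr0 by simp
        also have "\<dots> = w" using wr r P w by (metis comm_add_vec mult_mat_vec_carrier)
        finally show ?thesis using True by simp
      next
        case False
        hence u': "u \<in> set cs" using u by simp
        hence uc: "u \<in> carrier_vec n" using cs by auto
        have "r \<bullet> u = r \<bullet> (P *\<^sub>v u)" using Pfix u' by simp
        hence "r \<bullet> u = 0" using rP[OF uc] by simp
        hence "Q *\<^sub>v u = P *\<^sub>v u" using Qv[OF uc] r P uc by (intro eq_vecI) auto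
        thus ?thesis using Pfix u' by simp
      qed
    next
      fix v :: "real vec" assume v: "v \<in> carrier_vec n"
      obtain b where b: "b \<in> carrier_vec (length cs)" "P *\<^sub>v v = ?A *\<^sub>v b"
        using Pcol v unfolding colsp_def by auto
      obtain d where d: "d \<in> carrier_vec (length cs)" "P *\<^sub>v w = ?A *\<^sub>v d"
        using Pcol w unfolding colsp_def by auto
      define a where "a = (r \<bullet> v) / rr"
      have Ac: "?A \<in> carrier_mat n (length cs)" by simp
      have "Q *\<^sub>v v = ?A *\<^sub>v b + a \<cdot>\<^sub>v (w - ?A *\<^sub>v d)"
        using Qv[OF v] b d unfolding a_def r_def by simp
      also have "\<dots> = ?A *\<^sub>v (b - a \<cdot>\<^sub>v d) + a \<cdot>\<^sub>v w"
      proof -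
        have H: "?A *\<^sub>v (b - a \<cdot>\<^sub>v d) = ?A *\<^sub>v b - a \<cdot>\<^sub>v (?A *\<^sub>v d)"
          using mult_minus_distrib_mat_vec[OF Ac b(1), of "a \<cdot>\<^sub>v d"] mult_mat_vec[OF Ac d(1), of a] d by simp
        thus ?thesis using w b d Ac by (subst H) (intro eq_vecI, auto simp: algebra_simps)
      qed
      finally show "Q *\<^sub>v v \<in> colsp ?A'" using ext[of "b - a \<cdot>\<^sub>v d" a] b d by simp
    qed
  qed
qed


lemma mult_unit_col:
  fixes P :: "real mat"
  assumes "P \<in> carrier_mat n m" "j < m"
  shows "P *\<^sub>v unit_vec m j = col P j"
  using assms by (intro eq_vecI) (auto simp: scalar_prod_right_unit)

lemma cols_factor:
  fixes A B :: "real mat"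
  assumes A: "A \<in> carrier_mat n m" and B: "B \<in> carrier_mat n q"
    and c: "\<forall>j<m. col A j \<in> colsp B"
  shows "\<exists>Z\<in>carrier_mat q m. A = B * Z"
proof -
  define z where "z j = (SOME b. b \<in> carrier_vec q \<and> col A j = B *\<^sub>v b)" for j
  have z: "z j \<in> carrier_vec q \<and> col A j = B *\<^sub>v z j" if "j < m" for j
  proof -
    have "\<exists>b. b \<in> carrier_vec q \<and> col A j = B *\<^sub>v b"
      using c that B unfolding colsp_def by auto
    thus ?thesis unfolding z_def by (rule someI_ex)
  qed
  define Z where "Z = mat q m (\<lambda>(i,j). z j $ i)"
  have colZ: "col Z j = z j" if "j < m" for j
    using z[OF that] that by (intro eq_vecI) (auto simp: Z_def)
  have "A = B * Z"
  proof (rule eq_matI)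
    fix i j assume "i < dim_row (B * Z)" "j < dim_col (B * Z)"
    hence ij: "i < n" "j < m" using B by (auto simp: Z_def)
    have "(B * Z) $$ (i, j) = row B i \<bullet> z j" using ij B colZ[OF ij(2)] by (simp add: Z_def)
    also have "\<dots> = (B *\<^sub>v z j) $ i" using ij B by simp
    also have "\<dots> = col A j $ i" using z[OF ij(2)] by simp
    finally show "A $$ (i, j) = (B * Z) $$ (i, j)" using ij A by simp
  qed (use A B in \<open>auto simp: Z_def\<close>)
  thus ?thesis by (intro bexI[of _ Z]) (auto simp: Z_def)
qed

lemma proj_exists:
  fixes W :: "real mat"
  assumes W: "W \<in> carrier_mat n q"
  shows "\<exists>Pr. Pr \<in> carrier_mat n n \<and> transpose_mat Pr = Pr \<and> Pr * W = W \<and>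
       (\<exists>Y \<in> carrier_mat (dim_col W) n. Pr = W * Y)"
proof -
  have cs: "set (cols W) \<subseteq> carrier_vec n" using W by (auto simp: cols_def)
  have Wm: "mat_of_cols n (cols W) = W" using W mat_of_cols_cols[of W] by simp
  obtain P where P: "P \<in> carrier_mat n n" and PT: "transpose_mat P = P"
    and Pfix: "\<forall>w\<in>set (cols W). P *\<^sub>v w = w"
    and Pcol: "\<forall>v\<in>carrier_vec n. P *\<^sub>v v \<in> colsp W"
    using proj_exists_list[OF cs] unfolding Wm by blast
  have PW: "P * W = W"
  proof (rule eq_matI)
    fix i j assume "i < dim_row W" "j < dim_col W"
    hence ij: "i < n" "j < q" using W by auto
    have cj: "col W j \<in> set (cols W)" using ij W by (auto simp: cols_def)
    have "(P * W) $$ (i, j) = (P *\<^sub>v col W j) $ i" using ij P W by simp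
    also have "\<dots> = W $$ (i, j)" using Pfix cj ij W by simp
    finally show "(P * W) $$ (i, j) = W $$ (i, j)" .
  qed (use P W in auto)
  have "\<forall>j<n. col P j \<in> colsp W"
    using Pcol mult_unit_col[OF P] by (metis unit_vec_carrier)
  then obtain Y where Y: "Y \<in> carrier_mat q n" "P = W * Y"
    using cols_factor[OF P W] by blast
  show ?thesis using P PT PW Y W by (intro exI[of _ P]) auto
qed

lemma orth_proj_props:
  fixes W :: "real mat"
  assumes W: "W \<in> carrier_mat n q"
  defines "Pr \<equiv> orth_proj n W"
  shows "Pr \<in> carrier_mat n n \<and> transpose_mat Pr = Pr \<and> Pr * W = W \<and>
       (\<exists>Y \<in> carrier_mat q n. Pr = W * Y)"
proof -
  let ?Q = "\<lambda>Pr. Pr \<in> carrier_mat n n \<and> transpose_mat Pr = Pr \<and> Pr * W = W \<and>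
       (\<exists>Y \<in> carrier_mat (dim_col W) n. Pr = W * Y)"
  have uniq: "P1 = P2" if h1: "?Q P1" and h2: "?Q P2" for P1 P2
  proof -
    from h1 obtain Y1 where Y1: "Y1 \<in> carrier_mat q n" "P1 = W * Y1" using W by auto
    from h2 obtain Y2 where Y2: "Y2 \<in> carrier_mat q n" "P2 = W * Y2" using W by auto
    have c1: "P1 \<in> carrier_mat n n" and c2: "P2 \<in> carrier_mat n n" using h1 h2 by auto
    have a: "P2 * P1 = P1"
    proof -
      have "P2 * P1 = P2 * (W * Y1)" using Y1 by simp
      also have "\<dots> = (P2 * W) * Y1" using c2 W Y1 by (simp add: assoc_mult_mat)
      also have "\<dots> = P1" using h2 Y1 by simp
      finally show ?thesis .
    qed
    have b: "P1 * P2 = P2"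
    proof -
      have "P1 * P2 = P1 * (W * Y2)" using Y2 by simp
      also have "\<dots> = (P1 * W) * Y2" using c1 W Y2 by (simp add: assoc_mult_mat)
      also have "\<dots> = P2" using h1 Y2 by simp
      finally show ?thesis .
    qed
    have "P2 = transpose_mat P2" using h2 by simp
    also have "\<dots> = transpose_mat (P1 * P2)" using b by simp
    also have "\<dots> = transpose_mat P2 * transpose_mat P1" using c1 c2 by (simp add: transpose_mult)
    also have "\<dots> = P2 * P1" using h1 h2 by simp
    also have "\<dots> = P1" by (rule a)
    finally show ?thesis by simp
  qed
  have ex: "\<exists>P. ?Q P" using proj_exists[OF W] .
  have "?Q Pr" unfolding Pr_def orth_proj_def
    by (rule theI'[of ?Q]) (use ex uniq in blast)
  thus ?thesis using W by auto
qed


lemma info_kernel: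
  fixes W X :: "real mat"
  assumes W: "W \<in> carrier_mat n q" and X: "X \<in> carrier_mat n m" and x: "x \<in> carrier_vec m"
  defines "C \<equiv> transpose_mat X * (1\<^sub>m n - orth_proj n W) * X"
  shows "C *\<^sub>v x = 0\<^sub>v m \<longleftrightarrow> (\<exists>b\<in>carrier_vec q. X *\<^sub>v x = W *\<^sub>v b)"
proof -
  let ?Pr = "orth_proj n W"
  from orth_proj_props[OF W] obtain Y where Pr: "?Pr \<in> carrier_mat n n"
    and PrT: "transpose_mat ?Pr = ?Pr" and PrW: "?Pr * W = W"
    and Y: "Y \<in> carrier_mat q n" "?Pr = W * Y" by blast
  define M where "M = 1\<^sub>m n - ?Pr"
  have M: "M \<in> carrier_mat n n" unfolding M_def by (rule minus_carrier_mat[OF Pr])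
  have Mv: "M *\<^sub>v v = v - ?Pr *\<^sub>v v" if "v \<in> carrier_vec n" for v
    using that Pr unfolding M_def by (subst minus_mult_distrib_mat_vec[of _ n n]) auto
  have PrPr: "?Pr *\<^sub>v (?Pr *\<^sub>v v) = ?Pr *\<^sub>v v" if v: "v \<in> carrier_vec n" for v
  proof -
    have "?Pr *\<^sub>v (?Pr *\<^sub>v v) = (?Pr * ?Pr) *\<^sub>v v" by (rule assoc_mult_mat_vec[symmetric, OF Pr Pr v])
    also have "?Pr * ?Pr = ?Pr * W * Y" using Y Pr W by (metis assoc_mult_mat)
    also have "\<dots> = ?Pr" using PrW Y by simp
    finally show ?thesis .
  qed
  have MT: "transpose_mat M = M"
    unfolding M_def using transpose_minus[OF one_carrier_mat Pr] PrT by simp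
  have Msym: "u \<bullet> (M *\<^sub>v v) = (M *\<^sub>v u) \<bullet> v" if "u \<in> carrier_vec n" "v \<in> carrier_vec n" for u v
    using transpose_sprod[OF M MT that] by simp
  have MM: "M *\<^sub>v (M *\<^sub>v v) = M *\<^sub>v v" if v: "v \<in> carrier_vec n" for v
  proof -
    have pv: "?Pr *\<^sub>v v \<in> carrier_vec n" using Pr v by simp
    have "M *\<^sub>v (M *\<^sub>v v) = (v - ?Pr *\<^sub>v v) - ?Pr *\<^sub>v (v - ?Pr *\<^sub>v v)"
      using Mv v pv by simp
    also have "?Pr *\<^sub>v (v - ?Pr *\<^sub>v v) = ?Pr *\<^sub>v v - ?Pr *\<^sub>v v"
      using Pr v pv PrPr[OF v] by (simp add: mult_minus_distrib_mat_vec)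
    finally show ?thesis using Mv[OF v] v pv by (intro eq_vecI) auto
  qed
  have Cx: "C *\<^sub>v x = transpose_mat X *\<^sub>v (M *\<^sub>v (X *\<^sub>v x))"
  proof -
    have XT: "transpose_mat X \<in> carrier_mat m n" using X by simp
    have "C = transpose_mat X * M * X" unfolding C_def M_def ..
    also have "\<dots> *\<^sub>v x = (transpose_mat X * M) *\<^sub>v (X *\<^sub>v x)"
      by (rule assoc_mult_mat_vec[OF mult_carrier_mat[OF XT M] X x])
    also have "\<dots> = transpose_mat X *\<^sub>v (M *\<^sub>v (X *\<^sub>v x))"
      by (rule assoc_mult_mat_vec[OF XT M mult_mat_vec_carrier[OF X x]])
    finally show ?thesis .
  qed
  define z where "z = X *\<^sub>v x"
  have z: "z \<in> carrier_vec n" using X x by (simp add: z_def)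
  show ?thesis
  proof
    assume "C *\<^sub>v x = 0\<^sub>v m"
    hence "x \<bullet> (transpose_mat X *\<^sub>v (M *\<^sub>v z)) = 0" using Cx x by (simp add: z_def)
    moreover have "x \<bullet> (transpose_mat X *\<^sub>v (M *\<^sub>v z)) = z \<bullet> (M *\<^sub>v z)"
    proof -
      have "x \<bullet> (transpose_mat X *\<^sub>v (M *\<^sub>v z)) = (transpose_mat X *\<^sub>v (M *\<^sub>v z)) \<bullet> x"
        using x X M z by (intro comm_scalar_prod[of _ m]) auto
      also have "\<dots> = (M *\<^sub>v z) \<bullet> (X *\<^sub>v x)"
        using transpose_vec_mult_scalar[OF X x, of "M *\<^sub>v z"] X M z x by simp
      also have "\<dots> = z \<bullet> (M *\<^sub>v z)"
        using z M comm_scalar_prod[of "M *\<^sub>v z" n z] by (simp add: z_def[symmetric])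
      finally show ?thesis .
    qed
    moreover have "z \<bullet> (M *\<^sub>v z) = (M *\<^sub>v z) \<bullet> (M *\<^sub>v z)"
      using Msym[of z "M *\<^sub>v z"] MM[OF z] z M by simp
    ultimately have "(M *\<^sub>v z) \<bullet> (M *\<^sub>v z) = 0" by simp
    hence "M *\<^sub>v z = 0\<^sub>v n" using sprod_self_eq0[of "M *\<^sub>v z" n] M z by simp
    hence z0: "z - ?Pr *\<^sub>v z = 0\<^sub>v n" using Mv[OF z] by simp
    have "z = ?Pr *\<^sub>v z"
    proof (rule eq_vecI)
      fix i assume "i < dim_vec (?Pr *\<^sub>v z)"
      hence i: "i < n" using Pr by simp
      have "(z - ?Pr *\<^sub>v z) $ i = 0" using z0 i by simp
      thus "z $ i = (?Pr *\<^sub>v z) $ i" using i z Pr by simp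
    qed (use z Pr in simp)
    also have "\<dots> = W *\<^sub>v (Y *\<^sub>v z)" unfolding Y(2) by (rule assoc_mult_mat_vec[OF W Y(1) z])
    finally show "\<exists>b\<in>carrier_vec q. X *\<^sub>v x = W *\<^sub>v b" using Y z by (auto simp: z_def)
  next
    assume "\<exists>b\<in>carrier_vec q. X *\<^sub>v x = W *\<^sub>v b"
    then obtain b where b: "b \<in> carrier_vec q" "X *\<^sub>v x = W *\<^sub>v b" by blast
    have "?Pr *\<^sub>v (W *\<^sub>v b) = W *\<^sub>v b" using PrW Pr W b by (metis assoc_mult_mat_vec)
    hence "M *\<^sub>v (W *\<^sub>v b) = 0\<^sub>v n" using Mv[of "W *\<^sub>v b"] W b by simp
    moreover have "transpose_mat X *\<^sub>v 0\<^sub>v n = 0\<^sub>v m" using X by (intro eq_vecI) auto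
    ultimately show "C *\<^sub>v x = 0\<^sub>v m" using Cx b X by simp
  qed
qed


lemma span_as_colsp:
  fixes cs :: "real vec list"
  assumes cs: "set cs \<subseteq> carrier_vec n"
  shows "LinearCombinations.module.span class_ring (module_vec TYPE(real) n) (set cs) = colsp (mat_of_cols n cs)"
proof -
  interpret vec_space "TYPE(real)" n .
  have dims: "\<forall>w\<in>set cs. dim_vec w = n" using cs by auto
  have "span (set cs) = span_list cs" using span_list_as_span[OF cs] by simp
  also have "\<dots> = colsp (mat_of_cols n cs)"
  proof
    show "span_list cs \<subseteq> colsp (mat_of_cols n cs)"
      unfolding span_list_def colsp_def using lincomb_list_as_mat_mult[OF dims] by auto
  next
    show "colsp (mat_of_cols n cs) \<subseteq> span_list cs"
    proof
      fix y assume "y \<in> colsp (mat_of_cols n cs)"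
      then obtain v where v: "v \<in> carrier_vec (length cs)" "y = mat_of_cols n cs *\<^sub>v v"
        unfolding colsp_def by auto
      have "vec (length cs) (\<lambda>i. v $ i) = v" using v by (intro eq_vecI) auto
      hence "y = lincomb_list (\<lambda>i. v $ i) cs" using lincomb_list_as_mat_mult[OF dims] v by simp
      thus "y \<in> span_list cs" unfolding span_list_def by (auto simp: class_ring_simps)
    qed
  qed
  finally show ?thesis .
qed

lemma rank_eq_colsp:
  fixes A B :: "real mat"
  assumes A: "A \<in> carrier_mat n m" and B: "B \<in> carrier_mat n m'"
    and eq: "colsp A = colsp B"
  shows "vec_space.rank n A = vec_space.rank n B"
proof -
  have cA: "set (cols A) \<subseteq> carrier_vec n" using A by (auto simp: cols_def)
  have cB: "set (cols B) \<subseteq> carrier_vec n" using B by (auto simp: cols_def)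
  have "LinearCombinations.module.span class_ring (module_vec TYPE(real) n) (set (cols A)) = LinearCombinations.module.span class_ring (module_vec TYPE(real) n) (set (cols B))"
    using span_as_colsp[OF cA] span_as_colsp[OF cB] eq A B mat_of_cols_cols[of A] mat_of_cols_cols[of B]
    by simp
  thus ?thesis unfolding vec_space.rank_def by simp
qed


lemma mult_vec_entry:
  fixes A :: "real mat"
  assumes "A \<in> carrier_mat n m" "v \<in> carrier_vec m" "i < n"
  shows "(A *\<^sub>v v) $ i = (\<Sum>j\<in>{0..<m}. A $$ (i,j) * v $ j)"
  using assms by (simp add: scalar_prod_def)

lemma rank_le_removed:
  fixes A :: "real mat"
  assumes A: "A \<in> carrier_mat n m" and J: "J \<subseteq> {..<m}"
    and red: "\<forall>v\<in>carrier_vec m. \<exists>v'\<in>carrier_vec m. A *\<^sub>v v = A *\<^sub>v v' \<and> (\<forall>j\<in>J. v' $ j = 0)"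
  shows "vec_space.rank n A \<le> m - card J"
proof -
  define idx where "idx = filter (\<lambda>j. j \<notin> J) [0..<m]"
  have didx: "distinct idx" by (simp add: idx_def)
  have sidx: "set idx = {..<m} - J" by (auto simp: idx_def)
  have lidx: "length idx = m - card J"
  proof -
    have "length idx = card (set idx)" using distinct_card[OF didx] by simp
    also have "\<dots> = m - card J" unfolding sidx using J
      by (simp add: card_Diff_subset finite_subset)
    finally show ?thesis .
  qed
  define B where "B = mat_of_cols n (map (col A) idx)"
  have B: "B \<in> carrier_mat n (length idx)" using mat_of_cols_carrier(1)[of n "map (col A) idx"] by (simp add: B_def)
  have Bij: "B $$ (i, k) = A $$ (i, idx ! k)" if "i < n" "k < length idx" for i k
  proof -
    have "idx ! k < m" using nth_mem[OF that(2)] sidx by auto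
    thus ?thesis using that A by (simp add: B_def mat_of_cols_index)
  qed
  have sub1: "colsp A \<subseteq> colsp B"
  proof
    fix y assume "y \<in> colsp A"
    then obtain v where v: "v \<in> carrier_vec m" "y = A *\<^sub>v v" using A unfolding colsp_def by auto
    obtain v' where v': "v' \<in> carrier_vec m" "A *\<^sub>v v = A *\<^sub>v v'" "\<forall>j\<in>J. v' $ j = 0"
      using red v by blast
    define g where "g = vec (length idx) (\<lambda>k. v' $ (idx ! k))"
    have "A *\<^sub>v v' = B *\<^sub>v g"
    proof (rule eq_vecI)
      fix i assume "i < dim_vec (B *\<^sub>v g)"
      hence i: "i < n" using B by simp
      have "(A *\<^sub>v v') $ i = (\<Sum>j\<in>{0..<m}. A $$ (i,j) * v' $ j)" by (rule mult_vec_entry[OF A v'(1) i])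
      also have "\<dots> = (\<Sum>j\<in>set idx. A $$ (i,j) * v' $ j)"
        by (rule sum.mono_neutral_right) (use sidx v'(3) in auto)
      also have "\<dots> = sum_list (map (\<lambda>j. A $$ (i,j) * v' $ j) idx)"
        by (rule sum_list_distinct_conv_sum_set[OF didx, symmetric])
      also have "\<dots> = (\<Sum>k<length idx. A $$ (i, idx ! k) * v' $ (idx ! k))"
        by (simp add: sum_list_sum_nth atLeast0LessThan)
      also have "\<dots> = (\<Sum>k\<in>{0..<length idx}. B $$ (i,k) * g $ k)"
        using Bij[OF i] by (auto simp: g_def atLeast0LessThan intro!: sum.cong)
      also have "\<dots> = (B *\<^sub>v g) $ i" by (rule mult_vec_entry[OF B _ i, symmetric]) (simp add: g_def)
      finally show "(A *\<^sub>v v') $ i = (B *\<^sub>v g) $ i" .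
    qed (use A B in simp)
    thus "y \<in> colsp B" unfolding colsp_def using v v'(2) B by (auto simp: g_def)
  qed
  have sub2: "colsp B \<subseteq> colsp A"
  proof -
    have "\<forall>k<length idx. col B k \<in> colsp A"
    proof (intro allI impI)
      fix k assume k: "k < length idx"
      have ik: "idx ! k < m" using nth_mem[OF k] sidx by auto
      have "col B k = col A (idx ! k)" using k A ik by (simp add: B_def col_mat_of_cols)
      also have "\<dots> = A *\<^sub>v unit_vec m (idx ! k)" using mult_unit_col[OF A ik] by simp
      finally show "col B k \<in> colsp A" unfolding colsp_def using A ik by auto
    qed
    then obtain Z where Z: "Z \<in> carrier_mat m (length idx)" "B = A * Z"
      using cols_factor[OF B A] by blast
    show ?thesis
    proof
      fix y assume "y \<in> colsp B"
      then obtain w where w: "w \<in> carrier_vec (length idx)" "y = B *\<^sub>v w" using B unfolding colsp_def by auto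
      have "y = A *\<^sub>v (Z *\<^sub>v w)" using w Z A by (simp add: assoc_mult_mat_vec)
      thus "y \<in> colsp A" unfolding colsp_def using A Z w by auto
    qed
  qed
  have "vec_space.rank n A = vec_space.rank n B"
    by (rule rank_eq_colsp[OF A B]) (use sub1 sub2 in auto)
  also have "\<dots> \<le> length idx" using vec_space.rank_le_nc[OF B] .
  finally show ?thesis using lidx by simp
qed


lemma mult_shift_ker:
  fixes A :: "real mat"
  assumes A: "A \<in> carrier_mat n m" and u: "u \<in> carrier_vec m" and v: "v \<in> carrier_vec m"
    and Au: "A *\<^sub>v u = 0\<^sub>v n"
  shows "A *\<^sub>v (v - c \<cdot>\<^sub>v u) = A *\<^sub>v v"
proof -
  have "A *\<^sub>v (v - c \<cdot>\<^sub>v u) = A *\<^sub>v v - A *\<^sub>v (c \<cdot>\<^sub>v u)"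
    using mult_minus_distrib_mat_vec[OF A v, of "c \<cdot>\<^sub>v u"] u by simp
  also have "A *\<^sub>v (c \<cdot>\<^sub>v u) = 0\<^sub>v n" using mult_mat_vec[OF A u, of c] Au by (auto intro!: eq_vecI)
  finally show ?thesis using A v by (intro eq_vecI) auto
qed

lemma rank_ge_m1:
  fixes A :: "real mat"
  assumes A: "A \<in> carrier_mat n m" and m: "m \<ge> 1"
    and ker: "\<forall>x\<in>carrier_vec m. A *\<^sub>v x = 0\<^sub>v n \<longrightarrow> (\<forall>a<m. \<forall>b<m. x $ a = x $ b)"
  shows "vec_space.rank n A \<ge> m - 1"
proof -
  interpret vec_space "TYPE(real)" n .
  define B where "B = mat_of_cols n (map (col A) [0..<m-1])"
  have B: "B \<in> carrier_mat n (m-1)" using mat_of_cols_carrier(1)[of n "map (col A) [0..<m-1]"]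
    by (simp add: B_def)
  have colsB: "cols B = map (col A) [0..<m-1]" unfolding B_def
    by (rule cols_mat_of_cols) (use A in auto)
  have Bij: "B $$ (i, j) = A $$ (i, j)" if "i < n" "j < m - 1" for i j
    using that A by (simp add: B_def mat_of_cols_index)
  have dist: "distinct (cols B)"
  proof -
    have "inj_on (col A) {0..<m-1}"
    proof (rule inj_onI, rule ccontr)
      fix a b assume a: "a \<in> {0..<m-1}" and b: "b \<in> {0..<m-1}" and eq: "col A a = col A b" and ne: "a \<noteq> b"
      define x :: "real vec" where "x = unit_vec m a - unit_vec m b"
      have x: "x \<in> carrier_vec m" by (simp add: x_def)
      have "A *\<^sub>v x = A *\<^sub>v unit_vec m a - A *\<^sub>v unit_vec m b"
        unfolding x_def by (rule mult_minus_distrib_mat_vec[OF A]) auto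
      also have "\<dots> = col A a - col A b" using mult_unit_col[OF A] a b by auto
      also have "\<dots> = 0\<^sub>v n" unfolding eq using A by (intro eq_vecI) auto
      finally have "x $ a = x $ b" using ker x a b by auto
      thus False using a b ne by (simp add: x_def)
    qed
    thus ?thesis unfolding colsB by (simp add: distinct_map)
  qed
  have li: "lin_indpt (set (cols B))"
  proof
    assume "lin_dep (set (cols B))"
    then obtain v where v: "v \<in> carrier_vec (m-1)" "v \<noteq> 0\<^sub>v (m-1)" "B *\<^sub>v v = 0\<^sub>v n"
      using lin_depE[OF B _ dist] by blast
    define x where "x = vec m (\<lambda>j. if j < m - 1 then v $ j else 0)"
    have x: "x \<in> carrier_vec m" by (simp add: x_def)
    have "A *\<^sub>v x = B *\<^sub>v v"
    proof (rule eq_vecI)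
      fix i assume "i < dim_vec (B *\<^sub>v v)"
      hence i: "i < n" using B by simp
      have "(A *\<^sub>v x) $ i = (\<Sum>j\<in>{0..<m}. A $$ (i,j) * x $ j)" by (rule mult_vec_entry[OF A x i])
      also have "\<dots> = (\<Sum>j\<in>{0..<m-1}. A $$ (i,j) * x $ j)"
        by (rule sum.mono_neutral_right) (auto simp: x_def)
      also have "\<dots> = (\<Sum>j\<in>{0..<m-1}. B $$ (i,j) * v $ j)"
        using Bij[OF i] by (auto simp: x_def intro!: sum.cong)
      also have "\<dots> = (B *\<^sub>v v) $ i" by (rule mult_vec_entry[OF B v(1) i, symmetric])
      finally show "(A *\<^sub>v x) $ i = (B *\<^sub>v v) $ i" .
    qed (use A B in simp)
    hence "A *\<^sub>v x = 0\<^sub>v n" using v by simp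
    hence const: "\<forall>a<m. \<forall>b<m. x $ a = x $ b" using ker x by blast
    have "v = 0\<^sub>v (m-1)"
    proof (rule eq_vecI)
      fix j assume "j < dim_vec (0\<^sub>v (m - 1) :: real vec)"
      hence j: "j < m - 1" by simp
      have "x $ j = x $ (m-1)" using const j m by auto
      thus "v $ j = 0\<^sub>v (m - 1) $ j" using j m by (simp add: x_def)
    qed (use v in simp)
    thus False using v by simp
  qed
  have sub: "set (cols B) \<subseteq> set (cols A)"
    using A unfolding colsB by (auto simp: cols_def)
  have "card (set (cols B)) = m - 1" using distinct_card[OF dist] B by simp
  thus ?thesis using rank_ge_card_indpt[OF A sub li] by simp
qed

lemma rank_conn:
  fixes A :: "real mat"
  assumes A: "A \<in> carrier_mat m m" and m: "m \<ge> 1"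
    and one: "A *\<^sub>v vec m (\<lambda>_. 1) = 0\<^sub>v m"
  shows "vec_space.rank m A = m - 1 \<longleftrightarrow>
    (\<forall>x\<in>carrier_vec m. A *\<^sub>v x = 0\<^sub>v m \<longrightarrow> (\<forall>a<m. \<forall>b<m. x $ a = x $ b))"
proof
  assume r: "vec_space.rank m A = m - 1"
  show "\<forall>x\<in>carrier_vec m. A *\<^sub>v x = 0\<^sub>v m \<longrightarrow> (\<forall>a<m. \<forall>b<m. x $ a = x $ b)"
  proof (intro ballI impI allI, rule ccontr)
    fix x a b assume x: "x \<in> carrier_vec m" and Ax: "A *\<^sub>v x = 0\<^sub>v m" and a: "a < m" and b: "b < m"
      and ne: "x $ a \<noteq> x $ b"
    have ab: "a \<noteq> b" using ne by auto
    have "vec_space.rank m A \<le> m - card {a, b}"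
    proof (rule rank_le_removed[OF A])
      show "{a, b} \<subseteq> {..<m}" using a b by auto
      show "\<forall>v\<in>carrier_vec m. \<exists>v'\<in>carrier_vec m. A *\<^sub>v v = A *\<^sub>v v' \<and> (\<forall>j\<in>{a, b}. v' $ j = 0)"
      proof
        fix v :: "real vec" assume v: "v \<in> carrier_vec m"
        define \<beta> where "\<beta> = (v $ a - v $ b) / (x $ a - x $ b)"
        define \<alpha> where "\<alpha> = v $ a - \<beta> * x $ a"
        define v' where "v' = (v - \<alpha> \<cdot>\<^sub>v vec m (\<lambda>_. 1)) - \<beta> \<cdot>\<^sub>v x"
        have v'c: "v' \<in> carrier_vec m" using v x by (simp add: v'_def)
        have "A *\<^sub>v v' = A *\<^sub>v (v - \<alpha> \<cdot>\<^sub>v vec m (\<lambda>_. 1))"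
          unfolding v'_def by (rule mult_shift_ker[OF A x _ Ax]) (use v in simp)
        also have "\<dots> = A *\<^sub>v v" by (rule mult_shift_ker[OF A _ v one]) simp
        finally have e: "A *\<^sub>v v = A *\<^sub>v v'" by simp
        have d: "x $ a - x $ b \<noteq> 0" using ne by simp
        have va: "v' $ a = 0" using a v x by (simp add: v'_def \<alpha>_def)
        have "v' $ b = v $ b - v $ a + \<beta> * (x $ a - x $ b)"
          using b v x by (simp add: v'_def \<alpha>_def algebra_simps)
        also have "\<dots> = 0" using d by (simp add: \<beta>_def)
        finally have vb: "v' $ b = 0" .
        show "\<exists>v'\<in>carrier_vec m. A *\<^sub>v v = A *\<^sub>v v' \<and> (\<forall>j\<in>{a, b}. v' $ j = 0)"
          using v'c e va vb by blast
      qed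
    qed
    hence "vec_space.rank m A \<le> m - 2" using ab by simp
    moreover have "m \<ge> 2" using a b ab by auto
    ultimately show False using r by simp
  qed
next
  assume ker: "\<forall>x\<in>carrier_vec m. A *\<^sub>v x = 0\<^sub>v m \<longrightarrow> (\<forall>a<m. \<forall>b<m. x $ a = x $ b)"
  have ge: "vec_space.rank m A \<ge> m - 1" by (rule rank_ge_m1[OF A m ker])
  have "vec_space.rank m A \<le> m - card {m - 1}"
  proof (rule rank_le_removed[OF A])
    show "{m - 1} \<subseteq> {..<m}" using m by auto
    show "\<forall>v\<in>carrier_vec m. \<exists>v'\<in>carrier_vec m. A *\<^sub>v v = A *\<^sub>v v' \<and> (\<forall>j\<in>{m - 1}. v' $ j = 0)"
    proof
      fix v :: "real vec" assume v: "v \<in> carrier_vec m"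
      define v' where "v' = v - (v $ (m-1)) \<cdot>\<^sub>v vec m (\<lambda>_. 1)"
      have "A *\<^sub>v v' = A *\<^sub>v v" unfolding v'_def by (rule mult_shift_ker[OF A _ v one]) simp
      moreover have "v' $ (m-1) = 0" using v m by (simp add: v'_def)
      moreover have "v' \<in> carrier_vec m" using v by (simp add: v'_def)
      ultimately show "\<exists>v'\<in>carrier_vec m. A *\<^sub>v v = A *\<^sub>v v' \<and> (\<forall>j\<in>{m - 1}. v' $ j = 0)"
        by (intro bexI[of _ v']) auto
    qed
  qed
  thus "vec_space.rank m A = m - 1" using ge by simp
qed


definition wfl :: "nat \<Rightarrow> 'a set \<Rightarrow> 'a plan \<Rightarrow> bool" where
  "wfl t S P \<longleftrightarrow> finite S \<and> (\<forall>B\<in>set P. \<forall>r\<in>#B. \<forall>i<t. r i \<in> S)"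

lemma plan_wf_wfl: "plan_wf t k S P \<Longrightarrow> wfl t S P"
  unfolding plan_wf_def wfl_def by auto

lemma levs_props:
  assumes "finite S"
  shows "distinct (levs S)" "set (levs S) = S" "length (levs S) = card S"
proof -
  have "\<exists>xs. distinct xs \<and> set xs = S" using finite_distinct_list[OF assms] by blast
  hence h: "distinct (levs S) \<and> set (levs S) = S" unfolding levs_def by (rule someI_ex)
  thus "distinct (levs S)" "set (levs S) = S" by auto
  show "length (levs S) = card S" using h distinct_card by metis
qed

definition pos :: "'a set \<Rightarrow> 'a \<Rightarrow> nat" where
  "pos S p = (SOME j. j < length (levs S) \<and> levs S ! j = p)"

lemma pos_props:
  assumes "finite S" "p \<in> S"
  shows "pos S p < card S" "levs S ! pos S p = p"
proof -
  have "\<exists>j. j < length (levs S) \<and> levs S ! j = p"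
    using levs_props[OF assms(1)] assms(2) by (metis in_set_conv_nth)
  hence "pos S p < length (levs S) \<and> levs S ! pos S p = p" unfolding pos_def by (rule someI_ex)
  thus "pos S p < card S" "levs S ! pos S p = p" using levs_props[OF assms(1)] by auto
qed

lemma pos_nth:
  assumes "finite S" "j < card S"
  shows "pos S (levs S ! j) = j"
proof -
  have p: "levs S ! j \<in> S" using levs_props[OF assms(1)] assms(2) by (metis nth_mem)
  from pos_props[OF assms(1) p] have "pos S (levs S ! j) < card S" "levs S ! pos S (levs S ! j) = levs S ! j" .
  thus ?thesis using levs_props[OF assms(1)] assms(2) nth_eq_iff_index_eq by metis
qed

lemma levs_nth_in: "finite S \<Longrightarrow> j < card S \<Longrightarrow> levs S ! j \<in> S"
  using levs_props by (metis nth_mem)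

definition runs :: "'a plan \<Rightarrow> nat \<Rightarrow> 'a run list" where
  "runs P l = (SOME xs. mset xs = P ! l)"

lemma mset_runs: "mset (runs P l) = P ! l"
  unfolding runs_def by (rule someI_ex) (rule ex_mset)

lemma units_runs: "units P = concat (map (\<lambda>l. map (\<lambda>r. (l, r)) (runs P l)) [0..<length P])"
  unfolding units_def runs_def ..

lemma set_units: "set (units P) = {(l, r). l < length P \<and> r \<in># P ! l}"
  unfolding units_runs by (auto simp flip: mset_runs)

lemma units_nth:
  assumes "u < length (units P)"
  shows "fst (units P ! u) < length P" "snd (units P ! u) \<in># P ! fst (units P ! u)"
  using nth_mem[OF assms] unfolding set_units by auto

lemma units_lev:
  assumes "wfl t S P" "u < length (units P)" "i < t"
  shows "snd (units P ! u) i \<in> S"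
  using assms units_nth[OF assms(2)] unfolding wfl_def by (meson nth_mem)

lemma units_append:
  "units (P1 @ P2) = units P1 @ map (\<lambda>(l, r). (l + length P1, r)) (units P2)"
proof -
  have r1: "runs (P1 @ P2) l = runs P1 l" if "l < length P1" for l
    using that unfolding runs_def by (simp add: nth_append)
  have r2: "runs (P1 @ P2) (l + length P1) = runs P2 l" for l
    unfolding runs_def by (simp add: nth_append)
  have "[0..<length (P1 @ P2)] = [0..<length P1] @ map (\<lambda>l. l + length P1) [0..<length P2]"
    by (simp add: upt_add_eq_append[of 0] map_add_upt add.commute)
  hence "units (P1 @ P2) = concat (map (\<lambda>l. map (\<lambda>r. (l, r)) (runs (P1 @ P2) l)) [0..<length P1]) @
     concat (map (\<lambda>l. map (\<lambda>r. (l + length P1, r)) (runs (P1 @ P2) (l + length P1))) [0..<length P2])"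
    unfolding units_runs by (simp add: o_def)
  also have "\<dots> = units P1 @ map (\<lambda>(l, r). (l + length P1, r)) (units P2)"
  proof -
    have h: "map (\<lambda>l. map (Pair l) (runs (P1 @ P2) l)) [0..<length P1] = map (\<lambda>l. map (Pair l) (runs P1 l)) [0..<length P1]"
      using r1 by (intro map_cong) auto
    show ?thesis unfolding units_runs h using r2 by (simp add: map_concat o_def)
  qed
  finally show ?thesis .
qed

lemma length_units_append: "length (units (P1 @ P2)) = length (units P1) + length (units P2)"
  by (simp add: units_append)

lemma units_append_1:
  "u < length (units P1) \<Longrightarrow> units (P1 @ P2) ! u = units P1 ! u"
  by (simp add: units_append nth_append)

lemma units_append_2:
  "u < length (units P2) \<Longrightarrow> units (P1 @ P2) ! (length (units P1) + u) =
     (fst (units P2 ! u) + length P1, snd (units P2 ! u))"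
  by (simp add: units_append nth_append case_prod_beta)


abbreviation "nU P \<equiv> length (units P)"
definition Xm :: "'a set \<Rightarrow> 'a plan \<Rightarrow> nat \<Rightarrow> real mat" where
  "Xm S P i = mat_of_cols (nU P) (fac_cols S P i)"
definition ncols :: "nat \<Rightarrow> 'a set \<Rightarrow> 'a plan \<Rightarrow> nat \<Rightarrow> real vec list" where
  "ncols t S P i = [vec (nU P) (\<lambda>_. 1)] @ blk_cols P @
      concat (map (fac_cols S P) (filter (\<lambda>j. j \<noteq> i) [0..<t]))"

lemma nuis_mat_ncols: "nuis_mat t S P i = mat_of_cols (nU P) (ncols t S P i)"
  unfolding nuis_mat_def ncols_def ..

lemma length_fac_cols: "finite S \<Longrightarrow> length (fac_cols S P i) = card S"
  unfolding fac_cols_def using levs_props by simp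

lemma fac_cols_carrier: "set (fac_cols S P i) \<subseteq> carrier_vec (nU P)"
  unfolding fac_cols_def by auto

lemma ncols_carrier: "set (ncols t S P i) \<subseteq> carrier_vec (nU P)"
  unfolding ncols_def blk_cols_def fac_cols_def by auto

lemma W_carrier: "nuis_mat t S P i \<in> carrier_mat (nU P) (dim_col (nuis_mat t S P i))"
  unfolding nuis_mat_ncols by simp

lemma X_carrier: "finite S \<Longrightarrow> Xm S P i \<in> carrier_mat (nU P) (card S)"
  unfolding Xm_def using length_fac_cols mat_of_cols_carrier(1) by metis

lemma info_mat_Xm: "info_mat t S P i =
  transpose_mat (Xm S P i) * (1\<^sub>m (nU P) - orth_proj (nU P) (nuis_mat t S P i)) * Xm S P i"
  unfolding info_mat_def Xm_def Let_def ..

lemma info_carrier: "finite S \<Longrightarrow> info_mat t S P i \<in> carrier_mat (card S) (card S)"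
  unfolding info_mat_Xm using X_carrier[of S P i]
  by (metis carrier_matD(1) carrier_matD(2) carrier_matI index_minus_mat(3) index_mult_mat(2)
      index_mult_mat(3) index_one_mat(3) index_transpose_mat(2))

lemma info_kernel_plan:
  assumes "finite S" "x \<in> carrier_vec (card S)"
  shows "info_mat t S P i *\<^sub>v x = 0\<^sub>v (card S) \<longleftrightarrow> Xm S P i *\<^sub>v x \<in> colsp (nuis_mat t S P i)"
  unfolding info_mat_Xm colsp_def
  using info_kernel[OF W_carrier X_carrier[OF assms(1)] assms(2)] by auto

lemma X_entry:
  assumes w: "wfl t S P" and i: "i < t" and u: "u < nU P" and x: "x \<in> carrier_vec (card S)"
  shows "(Xm S P i *\<^sub>v x) $ u = x $ pos S (snd (units P ! u) i)"
proof -
  have fin: "finite S" using w by (simp add: wfl_def)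
  let ?r = "snd (units P ! u) i"
  have rS: "?r \<in> S" using units_lev[OF w u i] .
  have "(Xm S P i *\<^sub>v x) $ u = (\<Sum>j\<in>{0..<card S}. Xm S P i $$ (u, j) * x $ j)"
    by (rule mult_vec_entry[OF X_carrier[OF fin] x u])
  also have "\<dots> = (\<Sum>j\<in>{0..<card S}. if j = pos S ?r then x $ j else 0)"
  proof (rule sum.cong[OF refl])
    fix j assume j: "j \<in> {0..<card S}"
    have "Xm S P i $$ (u, j) = (if ?r = levs S ! j then 1 else 0)"
      using j u levs_props[OF fin] by (simp add: Xm_def fac_cols_def mat_of_cols_index)
    moreover have "(?r = levs S ! j) \<longleftrightarrow> j = pos S ?r"
      using pos_props[OF fin rS] pos_nth[OF fin] j by auto
    ultimately show "Xm S P i $$ (u, j) * x $ j = (if j = pos S ?r then x $ j else 0)" by simp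
  qed
  also have "\<dots> = x $ pos S ?r" using pos_props[OF fin rS] by simp
  finally show ?thesis .
qed

lemma col_in_colsp:
  fixes W :: "real mat"
  assumes "W \<in> carrier_mat n q" "k < q" shows "col W k \<in> colsp W"
  unfolding colsp_def using mult_unit_col[OF assms] assms by (intro CollectI exI[of _ "unit_vec q k"]) auto

lemma ncols_in_colsp:
  assumes "c \<in> set (ncols t S P i)" shows "c \<in> colsp (nuis_mat t S P i)"
proof -
  obtain k where k: "k < length (ncols t S P i)" "c = ncols t S P i ! k"
    using assms by (metis in_set_conv_nth)
  have "col (nuis_mat t S P i) k = c"
    unfolding nuis_mat_ncols using k nth_mem[OF k(1)] ncols_carrier[of t S P i] by (subst col_mat_of_cols) auto
  moreover have "col (nuis_mat t S P i) k \<in> colsp (nuis_mat t S P i)"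
    by (rule col_in_colsp[OF W_carrier]) (simp add: nuis_mat_ncols k)
  ultimately show ?thesis by simp
qed

lemma colsp_add:
  fixes W :: "real mat"
  assumes "a \<in> colsp W" "b \<in> colsp W" shows "a + b \<in> colsp W"
proof -
  obtain x y where "x \<in> carrier_vec (dim_col W)" "y \<in> carrier_vec (dim_col W)" "a = W *\<^sub>v x" "b = W *\<^sub>v y"
    using assms unfolding colsp_def by auto
  moreover have "W *\<^sub>v (x + y) = W *\<^sub>v x + W *\<^sub>v y" if "x \<in> carrier_vec (dim_col W)" "y \<in> carrier_vec (dim_col W)" for x y
    using that by (metis carrier_mat_triv mult_add_distrib_mat_vec)
  ultimately show ?thesis unfolding colsp_def by (metis (mono_tags, lifting) CollectI add_carrier_vec)
qed

lemma colsp_zero: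
  fixes W :: "real mat"
  shows "0\<^sub>v (dim_row W) \<in> colsp W"
  unfolding colsp_def by (intro CollectI exI[of _ "0\<^sub>v (dim_col W)"]) (auto intro!: eq_vecI)

lemma ones_colsp: "vec (nU P) (\<lambda>_. 1) \<in> colsp (nuis_mat t S P i)"
  by (rule ncols_in_colsp) (simp add: ncols_def)

lemma blk_colsp:
  "l < length P \<Longrightarrow> vec (nU P) (\<lambda>u. if fst (units P ! u) = l then 1 else 0) \<in> colsp (nuis_mat t S P i)"
  by (rule ncols_in_colsp) (auto simp: ncols_def blk_cols_def)

lemma fac_colsp:
  assumes "finite S" "j < t" "j \<noteq> i" "p \<in> S"
  shows "vec (nU P) (\<lambda>u. if snd (units P ! u) j = p then 1 else 0) \<in> colsp (nuis_mat t S P i)"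
proof (rule ncols_in_colsp)
  have "p \<in> set (levs S)" using levs_props[OF assms(1)] assms(4) by simp
  hence "vec (nU P) (\<lambda>u. if snd (units P ! u) j = p then 1 else 0) \<in> set (fac_cols S P j)"
    unfolding fac_cols_def by auto
  moreover have "j \<in> set (filter (\<lambda>j. j \<noteq> i) [0..<t])" using assms by auto
  ultimately show "vec (nU P) (\<lambda>u. if snd (units P ! u) j = p then 1 else 0) \<in> set (ncols t S P i)"
    unfolding ncols_def by auto
qed

lemma info_ones:
  assumes w: "wfl t S P" and i: "i < t"
  shows "info_mat t S P i *\<^sub>v vec (card S) (\<lambda>_. 1) = 0\<^sub>v (card S)"
proof -
  have fin: "finite S" using w by (simp add: wfl_def)
  have "Xm S P i *\<^sub>v vec (card S) (\<lambda>_. 1) = vec (nU P) (\<lambda>_. 1)"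
  proof (rule eq_vecI)
    fix u assume "u < dim_vec (vec (nU P) (\<lambda>_. 1) :: real vec)"
    hence u: "u < nU P" by simp
    show "(Xm S P i *\<^sub>v vec (card S) (\<lambda>_. 1)) $ u = vec (nU P) (\<lambda>_. 1) $ u"
      using X_entry[OF w i u, of "vec (card S) (\<lambda>_. 1)"] pos_props[OF fin units_lev[OF w u i]] u by simp
  qed (use X_carrier[OF fin] in auto)
  thus ?thesis using info_kernel_plan[OF fin, of "vec (card S) (\<lambda>_. 1)"] ones_colsp by simp
qed


lemma restr_colsp:
  fixes W W' :: "real mat"
  assumes W: "W \<in> carrier_mat n q" and W': "W' \<in> carrier_mat n' q'"
    and rho: "\<forall>u<n'. \<rho> u < n"
    and cols: "\<forall>k<q. vec n' (\<lambda>u. col W k $ \<rho> u) \<in> colsp W'"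
    and b: "b \<in> carrier_vec q"
  shows "vec n' (\<lambda>u. (W *\<^sub>v b) $ \<rho> u) \<in> colsp W'"
proof -
  define R where "R = mat n' q (\<lambda>(u,k). W $$ (\<rho> u, k))"
  have R: "R \<in> carrier_mat n' q" by (simp add: R_def)
  have "\<forall>k<q. col R k \<in> colsp W'"
  proof (intro allI impI)
    fix k assume k: "k < q"
    have "col R k = vec n' (\<lambda>u. col W k $ \<rho> u)"
      using k W rho by (intro eq_vecI) (auto simp: R_def)
    thus "col R k \<in> colsp W'" using cols k by simp
  qed
  then obtain Z where Z: "Z \<in> carrier_mat q' q" "R = W' * Z" using cols_factor[OF R W'] by blast
  have "vec n' (\<lambda>u. (W *\<^sub>v b) $ \<rho> u) = R *\<^sub>v b"
  proof (rule eq_vecI)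
    fix u assume "u < dim_vec (R *\<^sub>v b)"
    hence u: "u < n'" using R by simp
    have "(W *\<^sub>v b) $ \<rho> u = (\<Sum>j\<in>{0..<q}. W $$ (\<rho> u, j) * b $ j)"
      using mult_vec_entry[OF W b] rho u by simp
    also have "\<dots> = (R *\<^sub>v b) $ u" using mult_vec_entry[OF R b u] u by (simp add: R_def)
    finally show "vec n' (\<lambda>u. (W *\<^sub>v b) $ \<rho> u) $ u = (R *\<^sub>v b) $ u" using u by simp
  qed (use R in simp)
  also have "\<dots> = W' *\<^sub>v (Z *\<^sub>v b)" using Z W' b by (simp add: assoc_mult_mat_vec)
  finally show ?thesis unfolding colsp_def using Z W' b by auto
qed

lemma wfl_union: "wfl t S1 P1 \<Longrightarrow> wfl t S2 P2 \<Longrightarrow> wfl t (S1 \<union> S2) (P1 @ P2)"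
  unfolding wfl_def by auto

lemma zero_colsp_n: "0\<^sub>v (nU P) \<in> colsp (nuis_mat t S P i)"
  using colsp_zero[of "nuis_mat t S P i"] W_carrier[of t S P i] by simp

lemma restr1_cols:
  assumes w1: "wfl t S1 P1" and w2: "wfl t S2 P2"
    and c: "c \<in> set (ncols t (S1 \<union> S2) (P1 @ P2) i)"
  shows "vec (nU P1) (\<lambda>u. c $ u) \<in> colsp (nuis_mat t S1 P1 i)"
proof -
  let ?n = "nU (P1 @ P2)"
  have nn: "?n = nU P1 + nU P2" by (rule length_units_append)
  have fin1: "finite S1" using w1 by (simp add: wfl_def)
  have fin2: "finite S2" using w2 by (simp add: wfl_def)
  have finU: "finite (S1 \<union> S2)" using fin1 fin2 by simp
  from c consider (one) "c = vec ?n (\<lambda>_. 1)" | (blk) l where "l < length (P1 @ P2)"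
      "c = vec ?n (\<lambda>u. if fst (units (P1 @ P2) ! u) = l then 1 else 0)"
    | (fac) j p where "j < t" "j \<noteq> i" "p \<in> S1 \<union> S2"
      "c = vec ?n (\<lambda>u. if snd (units (P1 @ P2) ! u) j = p then 1 else 0)"
    unfolding ncols_def blk_cols_def fac_cols_def using levs_props(2)[OF finU] by auto
  thus ?thesis
  proof cases
    case one
    have "vec (nU P1) (\<lambda>u. c $ u) = vec (nU P1) (\<lambda>_. 1)" using one nn by (intro eq_vecI) auto
    thus ?thesis using ones_colsp by simp
  next
    case (blk l)
    show ?thesis
    proof (cases "l < length P1")
      case True
      have "vec (nU P1) (\<lambda>u. c $ u) = vec (nU P1) (\<lambda>u. if fst (units P1 ! u) = l then 1 else 0)"
        using blk nn by (intro eq_vecI) (auto simp: units_append_1)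
      thus ?thesis using blk_colsp[OF True] by simp
    next
      case False
      have "vec (nU P1) (\<lambda>u. c $ u) = 0\<^sub>v (nU P1)"
        using blk nn False units_nth(1)[of _ P1] by (intro eq_vecI) (auto simp: units_append_1)
      thus ?thesis using zero_colsp_n by simp
    qed
  next
    case (fac j p)
    show ?thesis
    proof (cases "p \<in> S1")
      case True
      have "vec (nU P1) (\<lambda>u. c $ u) = vec (nU P1) (\<lambda>u. if snd (units P1 ! u) j = p then 1 else 0)"
        using fac nn by (intro eq_vecI) (auto simp: units_append_1)
      thus ?thesis using fac_colsp[OF fin1 fac(1,2) True] by simp
    next
      case False
      have "vec (nU P1) (\<lambda>u. c $ u) = 0\<^sub>v (nU P1)"
        using fac nn False units_lev[OF w1 _ fac(1)] by (intro eq_vecI) (auto simp: units_append_1)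
      thus ?thesis using zero_colsp_n by simp
    qed
  qed
qed

lemma restr2_cols:
  assumes w1: "wfl t S1 P1" and w2: "wfl t S2 P2"
    and c: "c \<in> set (ncols t (S1 \<union> S2) (P1 @ P2) i)"
  shows "vec (nU P2) (\<lambda>u. c $ (nU P1 + u)) \<in> colsp (nuis_mat t S2 P2 i)"
proof -
  let ?n = "nU (P1 @ P2)"
  have nn: "?n = nU P1 + nU P2" by (rule length_units_append)
  have fin1: "finite S1" using w1 by (simp add: wfl_def)
  have fin2: "finite S2" using w2 by (simp add: wfl_def)
  have finU: "finite (S1 \<union> S2)" using fin1 fin2 by simp
  from c consider (one) "c = vec ?n (\<lambda>_. 1)" | (blk) l where "l < length (P1 @ P2)"
      "c = vec ?n (\<lambda>u. if fst (units (P1 @ P2) ! u) = l then 1 else 0)"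
    | (fac) j p where "j < t" "j \<noteq> i" "p \<in> S1 \<union> S2"
      "c = vec ?n (\<lambda>u. if snd (units (P1 @ P2) ! u) j = p then 1 else 0)"
    unfolding ncols_def blk_cols_def fac_cols_def using levs_props(2)[OF finU] by auto
  thus ?thesis
  proof cases
    case one
    have "vec (nU P2) (\<lambda>u. c $ (nU P1 + u)) = vec (nU P2) (\<lambda>_. 1)" using one nn by (intro eq_vecI) auto
    thus ?thesis using ones_colsp by simp
  next
    case (blk l)
    show ?thesis
    proof (cases "l < length P1")
      case False
      hence l2: "l - length P1 < length P2" using blk(1) by simp
      have "vec (nU P2) (\<lambda>u. c $ (nU P1 + u)) =
          vec (nU P2) (\<lambda>u. if fst (units P2 ! u) = l - length P1 then 1 else 0)"
        using blk nn False by (intro eq_vecI) (auto simp: units_append_2)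
      thus ?thesis using blk_colsp[OF l2] by simp
    next
      case True
      have "vec (nU P2) (\<lambda>u. c $ (nU P1 + u)) = 0\<^sub>v (nU P2)"
        using blk nn True by (intro eq_vecI) (auto simp: units_append_2)
      thus ?thesis using zero_colsp_n by simp
    qed
  next
    case (fac j p)
    show ?thesis
    proof (cases "p \<in> S2")
      case True
      have "vec (nU P2) (\<lambda>u. c $ (nU P1 + u)) = vec (nU P2) (\<lambda>u. if snd (units P2 ! u) j = p then 1 else 0)"
        using fac nn by (intro eq_vecI) (auto simp: units_append_2)
      thus ?thesis using fac_colsp[OF fin2 fac(1,2) True] by simp
    next
      case False
      have "vec (nU P2) (\<lambda>u. c $ (nU P1 + u)) = 0\<^sub>v (nU P2)"
        using fac nn False units_lev[OF w2 _ fac(1)] by (intro eq_vecI) (auto simp: units_append_2)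
      thus ?thesis using zero_colsp_n by simp
    qed
  qed
qed


lemma ker_restrict:
  assumes wU: "wfl t U PU" and wS: "wfl t S P" and i: "i < t"
    and x: "x \<in> carrier_vec (card U)"
    and k: "info_mat t U PU i *\<^sub>v x = 0\<^sub>v (card U)"
    and rho: "\<forall>u<nU P. \<rho> u < nU PU"
    and same: "\<forall>u<nU P. snd (units PU ! \<rho> u) = snd (units P ! u)"
    and cols: "\<forall>c\<in>set (ncols t U PU i). vec (nU P) (\<lambda>u. c $ \<rho> u) \<in> colsp (nuis_mat t S P i)"
    and SU: "S \<subseteq> U"
  shows "info_mat t S P i *\<^sub>v vec (card S) (\<lambda>j. x $ pos U (levs S ! j)) = 0\<^sub>v (card S)"
proof -
  have finU: "finite U" using wU by (simp add: wfl_def)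
  have finS: "finite S" using wS by (simp add: wfl_def)
  let ?x1 = "vec (card S) (\<lambda>j. x $ pos U (levs S ! j))"
  have x1: "?x1 \<in> carrier_vec (card S)" by simp
  obtain b where b: "b \<in> carrier_vec (dim_col (nuis_mat t U PU i))"
    "Xm U PU i *\<^sub>v x = nuis_mat t U PU i *\<^sub>v b"
    using info_kernel_plan[OF finU x, of t PU i] k unfolding colsp_def by auto
  have colsk: "\<forall>k<dim_col (nuis_mat t U PU i). vec (nU P) (\<lambda>u. col (nuis_mat t U PU i) k $ \<rho> u) \<in> colsp (nuis_mat t S P i)"
  proof (intro allI impI)
    fix k assume k: "k < dim_col (nuis_mat t U PU i)"
    hence k': "k < length (ncols t U PU i)" by (simp add: nuis_mat_ncols)
    have "col (nuis_mat t U PU i) k = ncols t U PU i ! k"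
      unfolding nuis_mat_ncols using k' nth_mem[OF k'] ncols_carrier[of t U PU i]
      by (subst col_mat_of_cols) auto
    thus "vec (nU P) (\<lambda>u. col (nuis_mat t U PU i) k $ \<rho> u) \<in> colsp (nuis_mat t S P i)"
      using cols nth_mem[OF k'] by simp
  qed
  have r: "vec (nU P) (\<lambda>u. (nuis_mat t U PU i *\<^sub>v b) $ \<rho> u) \<in> colsp (nuis_mat t S P i)"
    by (rule restr_colsp[OF W_carrier W_carrier rho colsk b(1)])
  have "Xm S P i *\<^sub>v ?x1 = vec (nU P) (\<lambda>u. (nuis_mat t U PU i *\<^sub>v b) $ \<rho> u)"
  proof (rule eq_vecI)
    fix u assume "u < dim_vec (vec (nU P) (\<lambda>u. (nuis_mat t U PU i *\<^sub>v b) $ \<rho> u))"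
    hence u: "u < nU P" by simp
    let ?r = "snd (units P ! u) i"
    have rS: "?r \<in> S" by (rule units_lev[OF wS u i])
    have "(Xm S P i *\<^sub>v ?x1) $ u = ?x1 $ pos S ?r" by (rule X_entry[OF wS i u x1])
    also have "\<dots> = x $ pos U ?r" using pos_props[OF finS rS] by simp
    also have "\<dots> = (Xm U PU i *\<^sub>v x) $ \<rho> u"
      using X_entry[OF wU i _ x, of "\<rho> u"] rho same u by simp
    finally show "(Xm S P i *\<^sub>v ?x1) $ u = vec (nU P) (\<lambda>u. (nuis_mat t U PU i *\<^sub>v b) $ \<rho> u) $ u"
      using b(2) u by simp
  qed (use X_carrier[OF finS, of P i] in simp)
  thus ?thesis using info_kernel_plan[OF finS x1] r by simp
qed

lemma conn_iff_ker:
  assumes w: "wfl t S P" and i: "i < t" and c: "card S \<ge> 1"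
  shows "vec_space.rank (card S) (info_mat t S P i) = card S - 1 \<longleftrightarrow>
    (\<forall>x\<in>carrier_vec (card S). info_mat t S P i *\<^sub>v x = 0\<^sub>v (card S) \<longrightarrow>
       (\<forall>a<card S. \<forall>b<card S. x $ a = x $ b))"
  by (rule rank_conn[OF info_carrier c info_ones[OF w i]]) (use w in \<open>simp add: wfl_def\<close>)

lemma connected_iff:
  assumes "card S \<ge> 1"
  shows "connected_plan t S P \<longleftrightarrow> (\<forall>i<t. vec_space.rank (card S) (info_mat t S P i) = card S - 1)"
  unfolding connected_plan_def using assms by auto

lemma connected_card:
  assumes "connected_plan t S P" "t \<ge> 1" shows "card S \<ge> 1"
  using assms unfolding connected_plan_def by force

lemma blocks_prefix:
  "K \<le> length P \<Longrightarrow> vec (nU P) (\<lambda>u. if fst (units P ! u) < K then 1 else 0) \<in> colsp (nuis_mat t S P i)"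
proof (induction K)
  case 0
  have "vec (nU P) (\<lambda>u. if fst (units P ! u) < 0 then 1 else 0) = (0\<^sub>v (nU P) :: real vec)"
    by (intro eq_vecI) auto
  thus ?case using zero_colsp_n by simp
next
  case (Suc K)
  have "vec (nU P) (\<lambda>u. if fst (units P ! u) < Suc K then 1 else 0) =
      vec (nU P) (\<lambda>u. if fst (units P ! u) < K then 1 else 0) +
      vec (nU P) (\<lambda>u. if fst (units P ! u) = K then 1 else (0::real))"
    by (intro eq_vecI) auto
  moreover have "vec (nU P) (\<lambda>u. if fst (units P ! u) = K then 1 else (0::real)) \<in> colsp (nuis_mat t S P i)"
    by (rule blk_colsp) (use Suc.prems in simp)
  ultimately show ?case using Suc colsp_add by simp
qed


lemma conn_union:
  assumes t: "t \<ge> 1" and w1: "wfl t S1 P1" and w2: "wfl t S2 P2"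
    and c1: "connected_plan t S1 P1" and c2: "connected_plan t S2 P2"
  shows "connected_plan t (S1 \<union> S2) (P1 @ P2) \<longleftrightarrow> S1 \<inter> S2 \<noteq> {}"
proof -
  let ?U = "S1 \<union> S2" and ?PU = "P1 @ P2"
  have wU: "wfl t ?U ?PU" by (rule wfl_union[OF w1 w2])
  have fin1: "finite S1" and fin2: "finite S2" using w1 w2 by (auto simp: wfl_def)
  have finU: "finite ?U" using fin1 fin2 by simp
  have card1: "card S1 \<ge> 1" by (rule connected_card[OF c1 t])
  have card2: "card S2 \<ge> 1" by (rule connected_card[OF c2 t])
  have cardU: "card ?U \<ge> 1" using card1 card_mono[OF finU, of S1] by auto
  have K1: "\<forall>x\<in>carrier_vec (card S1). info_mat t S1 P1 i *\<^sub>v x = 0\<^sub>v (card S1) \<longrightarrow>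
       (\<forall>a<card S1. \<forall>b<card S1. x $ a = x $ b)" if i: "i < t" for i
  proof -
    have "vec_space.rank (card S1) (info_mat t S1 P1 i) = card S1 - 1"
      using c1 i unfolding connected_iff[OF card1] by blast
    thus ?thesis by (rule iffD1[OF conn_iff_ker[OF w1 i card1]])
  qed
  have K2: "\<forall>x\<in>carrier_vec (card S2). info_mat t S2 P2 i *\<^sub>v x = 0\<^sub>v (card S2) \<longrightarrow>
       (\<forall>a<card S2. \<forall>b<card S2. x $ a = x $ b)" if i: "i < t" for i
  proof -
    have "vec_space.rank (card S2) (info_mat t S2 P2 i) = card S2 - 1"
      using c2 i unfolding connected_iff[OF card2] by blast
    thus ?thesis by (rule iffD1[OF conn_iff_ker[OF w2 i card2]])
  qed
  have nn: "nU ?PU = nU P1 + nU P2" by (rule length_units_append)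
  have R1: "info_mat t S1 P1 i *\<^sub>v vec (card S1) (\<lambda>j. x $ pos ?U (levs S1 ! j)) = 0\<^sub>v (card S1)"
    if i: "i < t" and x: "x \<in> carrier_vec (card ?U)" and k: "info_mat t ?U ?PU i *\<^sub>v x = 0\<^sub>v (card ?U)" for i x
  proof (rule ker_restrict[OF wU w1 i x k, of "\<lambda>u. u"])
    show "\<forall>u<nU P1. u < nU ?PU" using nn by simp
    show "\<forall>u<nU P1. snd (units ?PU ! u) = snd (units P1 ! u)" using units_append_1[of _ P1 P2] by auto
    show "\<forall>c\<in>set (ncols t ?U ?PU i). vec (nU P1) (($) c) \<in> colsp (nuis_mat t S1 P1 i)"
      using restr1_cols[OF w1 w2] by blast
  qed simp
  have R2: "info_mat t S2 P2 i *\<^sub>v vec (card S2) (\<lambda>j. x $ pos ?U (levs S2 ! j)) = 0\<^sub>v (card S2)"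
    if i: "i < t" and x: "x \<in> carrier_vec (card ?U)" and k: "info_mat t ?U ?PU i *\<^sub>v x = 0\<^sub>v (card ?U)" for i x
  proof (rule ker_restrict[OF wU w2 i x k, of "\<lambda>u. nU P1 + u"])
    show "\<forall>u<nU P2. nU P1 + u < nU ?PU" using nn by simp
    show "\<forall>u<nU P2. snd (units ?PU ! (nU P1 + u)) = snd (units P2 ! u)" using units_append_2[of _ P2 P1] by auto
    show "\<forall>c\<in>set (ncols t ?U ?PU i). vec (nU P2) (\<lambda>u. c $ (nU P1 + u)) \<in> colsp (nuis_mat t S2 P2 i)"
      using restr2_cols[OF w1 w2] by blast
  qed simp
  show ?thesis
  proof
    assume cU: "connected_plan t ?U ?PU"
    show "S1 \<inter> S2 \<noteq> {}"
    proof
      assume disj: "S1 \<inter> S2 = {}"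
      have i0: "0 < t" using t by simp
      have KU: "\<forall>x\<in>carrier_vec (card ?U). info_mat t ?U ?PU 0 *\<^sub>v x = 0\<^sub>v (card ?U) \<longrightarrow>
        (\<forall>a<card ?U. \<forall>b<card ?U. x $ a = x $ b)"
      proof -
        have "vec_space.rank (card ?U) (info_mat t ?U ?PU 0) = card ?U - 1"
          using cU i0 unfolding connected_iff[OF cardU] by blast
        thus ?thesis by (rule iffD1[OF conn_iff_ker[OF wU i0 cardU]])
      qed
      define x :: "real vec" where "x = vec (card ?U) (\<lambda>j. if levs ?U ! j \<in> S1 then 1 else 0)"
      have x: "x \<in> carrier_vec (card ?U)" by (simp add: x_def)
      have "Xm ?U ?PU 0 *\<^sub>v x = vec (nU ?PU) (\<lambda>u. if fst (units ?PU ! u) < length P1 then 1 else 0)"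
      proof (rule eq_vecI)
        fix u assume "u < dim_vec (vec (nU ?PU) (\<lambda>u. if fst (units ?PU ! u) < length P1 then 1 else (0::real)))"
        hence u: "u < nU ?PU" by simp
        let ?r = "snd (units ?PU ! u) 0"
        have rU: "?r \<in> ?U" by (rule units_lev[OF wU u i0])
        have "(Xm ?U ?PU 0 *\<^sub>v x) $ u = x $ pos ?U ?r" by (rule X_entry[OF wU i0 u x])
        also have "\<dots> = (if ?r \<in> S1 then 1 else 0)"
          using pos_props[OF finU rU] by (simp add: x_def)
        also have "\<dots> = (if fst (units ?PU ! u) < length P1 then 1 else 0)"
        proof (cases "u < nU P1")
          case True
          thus ?thesis using units_append_1[OF True, of P2] units_lev[OF w1 True i0] units_nth(1)[OF True]
            by simp
        next
          case False
          define v where "v = u - nU P1"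
          have v: "v < nU P2" "u = nU P1 + v" using u False nn by (auto simp: v_def)
          have "?r \<in> S2" using units_append_2[OF v(1), of P1] units_lev[OF w2 v(1) i0] v(2) by simp
          hence "?r \<notin> S1" using disj by auto
          thus ?thesis using units_append_2[OF v(1), of P1] v(2) by simp
        qed
        finally show "(Xm ?U ?PU 0 *\<^sub>v x) $ u = vec (nU ?PU) (\<lambda>u. if fst (units ?PU ! u) < length P1 then 1 else 0) $ u"
          using u by simp
      qed (use X_carrier[OF finU, of ?PU 0] in simp)
      moreover have "vec (nU ?PU) (\<lambda>u. if fst (units ?PU ! u) < length P1 then 1 else (0::real))
          \<in> colsp (nuis_mat t ?U ?PU 0)"
        by (rule blocks_prefix) simp
      ultimately have "info_mat t ?U ?PU 0 *\<^sub>v x = 0\<^sub>v (card ?U)"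
        using info_kernel_plan[OF finU x] by simp
      hence const: "x $ a = x $ b" if "a < card ?U" "b < card ?U" for a b
        using KU[rule_format, OF x _ that] by blast
      obtain p1 where p1: "p1 \<in> S1" using card1 by (metis card.empty ex_in_conv not_one_le_zero)
      obtain p2 where p2: "p2 \<in> S2" using card2 by (metis card.empty ex_in_conv not_one_le_zero)
      have p1U: "p1 \<in> ?U" and p2U: "p2 \<in> ?U" using p1 p2 by auto
      have "x $ pos ?U p1 = 1" using pos_props[OF finU p1U] p1 by (simp add: x_def)
      moreover have "x $ pos ?U p2 = 0" using pos_props[OF finU p2U] p2 disj by (auto simp: x_def)
      moreover have "x $ pos ?U p1 = x $ pos ?U p2"
        by (rule const[OF pos_props(1)[OF finU p1U] pos_props(1)[OF finU p2U]])
      ultimately show False by simp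
    qed
  next
    assume "S1 \<inter> S2 \<noteq> {}"
    then obtain p0 where p0: "p0 \<in> S1" "p0 \<in> S2" by blast
    have p0U: "p0 \<in> ?U" using p0 by simp
    show "connected_plan t ?U ?PU"
      unfolding connected_iff[OF cardU]
    proof (intro allI impI)
      fix i assume i: "i < t"
      show "vec_space.rank (card ?U) (info_mat t ?U ?PU i) = card ?U - 1"
        unfolding conn_iff_ker[OF wU i cardU]
      proof (intro ballI impI allI)
        fix x a b assume x: "x \<in> carrier_vec (card ?U)" and k: "info_mat t ?U ?PU i *\<^sub>v x = 0\<^sub>v (card ?U)"
          and a: "a < card ?U" and b: "b < card ?U"
        have c1: "x $ pos ?U (levs S1 ! a') = x $ pos ?U (levs S1 ! b')" if "a' < card S1" "b' < card S1" for a' b'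
          using K1[OF i, rule_format, OF vec_carrier R1[OF i x k] that] that by simp
        have c2: "x $ pos ?U (levs S2 ! a') = x $ pos ?U (levs S2 ! b')" if "a' < card S2" "b' < card S2" for a' b'
          using K2[OF i, rule_format, OF vec_carrier R2[OF i x k] that] that by simp
        have toP0: "x $ a = x $ pos ?U p0" if a: "a < card ?U" for a
        proof -
          let ?pa = "levs ?U ! a"
          have pa: "?pa \<in> ?U" by (rule levs_nth_in[OF finU a])
          have apos: "pos ?U ?pa = a" by (rule pos_nth[OF finU a])
          show ?thesis
          proof (cases "?pa \<in> S1")
            case True
            have "x $ pos ?U (levs S1 ! pos S1 ?pa) = x $ pos ?U (levs S1 ! pos S1 p0)"
              by (rule c1[OF pos_props(1)[OF fin1 True] pos_props(1)[OF fin1 p0(1)]])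
            thus ?thesis using pos_props(2)[OF fin1 True] pos_props(2)[OF fin1 p0(1)] apos by simp
          next
            case False
            hence True': "?pa \<in> S2" using pa by simp
            have "x $ pos ?U (levs S2 ! pos S2 ?pa) = x $ pos ?U (levs S2 ! pos S2 p0)"
              by (rule c2[OF pos_props(1)[OF fin2 True'] pos_props(1)[OF fin2 p0(2)]])
            thus ?thesis using pos_props(2)[OF fin2 True'] pos_props(2)[OF fin2 p0(2)] apos by simp
          qed
        qed
        show "x $ a = x $ b" using toP0[OF a] toP0[OF b] by simp
      qed
    qed
  qed
qed


lemma sum_split_add: "(\<Sum>l<a + b. f l) = (\<Sum>l<a. f l) + (\<Sum>l<b. f (a + l)::nat)" for a b :: nat
  by (induction b) auto

lemma Nmat_append: "Nmat (P1 @ P2) i j p q = Nmat P1 i j p q + Nmat P2 i j p q"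
  unfolding Nmat_def by simp

lemma Lmat_append1: "l < length P1 \<Longrightarrow> Lmat (P1 @ P2) i p l = Lmat P1 i p l"
  unfolding Lmat_def by (simp add: nth_append)

lemma Lmat_append2: "Lmat (P1 @ P2) i p (length P1 + l) = Lmat P2 i p l"
  unfolding Lmat_def by (simp add: nth_append)

lemma Nmat_out1:
  assumes w: "wfl t S P" and i: "i < t" and p: "p \<notin> S" shows "Nmat P i j p q = 0"
proof -
  have "size (filter_mset (\<lambda>r. r i = p \<and> r j = q) B) = 0" if "B \<in> set P" for B
    using w that i p unfolding wfl_def by (auto simp: size_eq_0_iff_empty)
  thus ?thesis unfolding Nmat_def by (auto simp: sum_list_eq_0_iff)
qed

lemma Nmat_out2:
  assumes w: "wfl t S P" and j: "j < t" and q: "q \<notin> S" shows "Nmat P i j p q = 0"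
proof -
  have "size (filter_mset (\<lambda>r. r i = p \<and> r j = q) B) = 0" if "B \<in> set P" for B
    using w that j q unfolding wfl_def by (auto simp: size_eq_0_iff_empty)
  thus ?thesis unfolding Nmat_def by (auto simp: sum_list_eq_0_iff)
qed

lemma Lmat_out:
  assumes w: "wfl t S P" and i: "i < t" and p: "p \<notin> S" and l: "l < length P" shows "Lmat P i p l = 0"
  using w i p nth_mem[OF l] unfolding wfl_def Lmat_def by (auto simp: size_eq_0_iff_empty)

lemma OTB_ext:
  assumes w: "wfl t S P" and i: "i < t" and j: "j < t" and o: "OTB k S P i j"
  shows "k * Nmat P i j p q = (\<Sum>l<length P. Lmat P i p l * Lmat P j q l)"
proof (cases "p \<in> S")
  case False
  thus ?thesis using Nmat_out1[OF w i False] Lmat_out[OF w i False] by simp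
next
  case pT: True
  show ?thesis
  proof (cases "q \<in> S")
    case True thus ?thesis using o pT unfolding OTB_def by blast
  next
    case False
    thus ?thesis using Nmat_out2[OF w j False] Lmat_out[OF w j False] by simp
  qed
qed

lemma POTB_union:
  assumes w1: "wfl t S1 P1" and w2: "wfl t S2 P2"
    and o1: "POTB t k S1 P1" and o2: "POTB t k S2 P2"
  shows "POTB t k (S1 \<union> S2) (P1 @ P2)"
  unfolding POTB_def OTB_def
proof (intro allI impI ballI)
  fix i j p q assume i: "i < t" and j: "j < t" and ij: "i \<noteq> j"
  have e1: "k * Nmat P1 i j p q = (\<Sum>l<length P1. Lmat P1 i p l * Lmat P1 j q l)"
    using OTB_ext[OF w1 i j] o1 i j ij unfolding POTB_def by blast
  have e2: "k * Nmat P2 i j p q = (\<Sum>l<length P2. Lmat P2 i p l * Lmat P2 j q l)"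
    using OTB_ext[OF w2 i j] o2 i j ij unfolding POTB_def by blast
  have "k * Nmat (P1 @ P2) i j p q = k * Nmat P1 i j p q + k * Nmat P2 i j p q"
    by (simp add: Nmat_append algebra_simps)
  also have "\<dots> = (\<Sum>l<length P1. Lmat (P1 @ P2) i p l * Lmat (P1 @ P2) j q l) +
      (\<Sum>l<length P2. Lmat (P1 @ P2) i p (length P1 + l) * Lmat (P1 @ P2) j q (length P1 + l))"
    unfolding e1 e2 Lmat_append2 by (simp add: Lmat_append1)
  also have "\<dots> = (\<Sum>l<length (P1 @ P2). Lmat (P1 @ P2) i p l * Lmat (P1 @ P2) j q l)"
    by (simp add: sum_split_add)
  finally show "k * Nmat (P1 @ P2) i j p q = (\<Sum>l<length (P1 @ P2). Lmat (P1 @ P2) i p l * Lmat (P1 @ P2) j q l)" .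
qed

theorem lemma4p2:
  fixes P1 P2 :: "'a plan" and S1 S2 :: "'a set" and t k :: nat
  assumes "t \<ge> 1"
    and wf1: "plan_wf t k S1 P1" and wf2: "plan_wf t k S2 P2"
    and "S1 \<noteq> S2"
  shows "(POTB t k S1 P1 \<and> POTB t k S2 P2 \<longrightarrow> POTB t k (S1 \<union> S2) (union_plan P1 P2))
       \<and> (connected_plan t S1 P1 \<and> connected_plan t S2 P2 \<longrightarrow>
           (connected_plan t (S1 \<union> S2) (union_plan P1 P2) \<longleftrightarrow> S1 \<inter> S2 \<noteq> {}))"
  using POTB_union[OF plan_wf_wfl[OF wf1] plan_wf_wfl[OF wf2]]
    conn_union[OF assms(1) plan_wf_wfl[OF wf1] plan_wf_wfl[OF wf2]]
  unfolding union_plan_def by blast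


thm_deps lemma4p2

end
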